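(* Let $\alpha,\beta,\gamma$ be real constants with $\beta\neq 0$, $\alpha\beta\neq 3$ and $\beta^2\gamma+3\alpha\beta-9=0$. Then for every constant $a_2$, the functions $$q(t)=\pm\frac{\sqrt{9a_2(\alpha\beta-3)^2e^{-\frac{2(\alpha\beta-3)}{\beta}t}-3\beta^2(\alpha\beta-3)e^{-\frac{4(\alpha\beta-3)}{\beta}t}}}{\beta^2e^{-\frac{2(\alpha\beta-3)}{\beta}t}-3a_2(\alpha\beta-3)},\qquad p(t)=(\alpha\beta-3)\frac{q(t)}{\beta}+\frac{\beta}{3}q(t)^3,$$ on any interval where they are defined and real, solve the system $$\dot q=-p,\qquad \dot p=-\gamma q+q^3-(\alpha+\beta q^2)p,$$ so that $q$ solves the force-free Duffing–Van der Pol equation $\ddot q+(\alpha+\beta q^2)\dot q-\gamma q+q^3=0$. These are exactly the solutions on which the first integral $I_2=\big[p-(\alpha\beta-3)\frac{q}{\beta}-\frac{\beta}{3}q^3\big]e^{3t/\beta}$ vanishes (with $q\neq0$). *)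

theory Defs
  imports "HOL-Analysis.Analysis"
begin

definition expE :: "real \<Rightarrow> real \<Rightarrow> real \<Rightarrow> real" where
  "expE \<alpha> \<beta> t = exp (- (2 * (\<alpha> * \<beta> - 3) / \<beta>) * t)"

definition radicand :: "real \<Rightarrow> real \<Rightarrow> real \<Rightarrow> real \<Rightarrow> real" where
  "radicand \<alpha> \<beta> a2 t =
     9 * a2 * (\<alpha> * \<beta> - 3)^2 * expE \<alpha> \<beta> t
     - 3 * \<beta>^2 * (\<alpha> * \<beta> - 3) * exp (- (4 * (\<alpha> * \<beta> - 3) / \<beta>) * t)"

definition denom :: "real \<Rightarrow> real \<Rightarrow> real \<Rightarrow> real \<Rightarrow> real" where
  "denom \<alpha> \<beta> a2 t = \<beta>^2 * expE \<alpha> \<beta> t - 3 * a2 * (\<alpha> * \<beta> - 3)"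

text \<open>The explicit q(t); the sign s is +1 or -1 (the \<open>\<plusminus>\<close>).\<close>
definition qsol :: "real \<Rightarrow> real \<Rightarrow> real \<Rightarrow> real \<Rightarrow> real \<Rightarrow> real" where
  "qsol \<alpha> \<beta> a2 s t = s * sqrt (radicand \<alpha> \<beta> a2 t) / denom \<alpha> \<beta> a2 t"

definition psol :: "real \<Rightarrow> real \<Rightarrow> real \<Rightarrow> real \<Rightarrow> real \<Rightarrow> real" where
  "psol \<alpha> \<beta> a2 s t =
     (\<alpha> * \<beta> - 3) * qsol \<alpha> \<beta> a2 s t / \<beta> + \<beta> / 3 * (qsol \<alpha> \<beta> a2 s t)^3"

definition firstI2 :: "real \<Rightarrow> real \<Rightarrow> (real \<Rightarrow> real) \<Rightarrow> (real \<Rightarrow> real) \<Rightarrow> real \<Rightarrow> real" where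
  "firstI2 \<alpha> \<beta> q p t =
     (p t - (\<alpha> * \<beta> - 3) * q t / \<beta> - \<beta> / 3 * (q t)^3) * exp (3 * t / \<beta>)"

end

theory Submission
  imports Defs
begin

lemma exp4: "exp (- (4 * (k::real) / \<beta>) * t) = (exp (-(2*k/\<beta>)*t))^2"
proof -
  have "- (4 * k / \<beta>) * t = (-(2*k/\<beta>)*t) + (-(2*k/\<beta>)*t)" by (simp add: field_simps)
  then show ?thesis by (simp add: exp_add[symmetric] power2_eq_square)
qed

lemma rad_eq: "radicand \<alpha> \<beta> a2 t = -3*(\<alpha>*\<beta>-3)*expE \<alpha> \<beta> t * denom \<alpha> \<beta> a2 t"
proof -
  have "exp (- (4 * (\<alpha>*\<beta>-3) / \<beta>) * t) = (expE \<alpha> \<beta> t)^2" unfolding expE_def by (rule exp4)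
  then show ?thesis unfolding radicand_def denom_def
    by (simp add: algebra_simps power2_eq_square)
qed

lemma dE: "(expE \<alpha> \<beta> has_real_derivative (-(2*(\<alpha>*\<beta>-3)/\<beta>)) * expE \<alpha> \<beta> t) (at t)"
  unfolding expE_def[abs_def] 
  using DERIV_chain2[OF DERIV_exp DERIV_cmult[OF DERIV_ident, of "-(2*(\<alpha>*\<beta>-3)/\<beta>)" t UNIV]]
  by (simp add: mult.commute)

lemma dD: "(denom \<alpha> \<beta> a2 has_real_derivative \<beta>^2*((-(2*(\<alpha>*\<beta>-3)/\<beta>)) * expE \<alpha> \<beta> t)) (at t)"
  unfolding denom_def[abs_def] by (auto intro!: derivative_eq_intros dE)

lemma dR: "(radicand \<alpha> \<beta> a2 has_real_derivative 
    -3*(\<alpha>*\<beta>-3)*((-(2*(\<alpha>*\<beta>-3)/\<beta>)) * expE \<alpha> \<beta> t * denom \<alpha> \<beta> a2 t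
     + expE \<alpha> \<beta> t * (\<beta>^2*((-(2*(\<alpha>*\<beta>-3)/\<beta>)) * expE \<alpha> \<beta> t)))) (at t)"
proof -
  have "radicand \<alpha> \<beta> a2 = (\<lambda>t. -3*(\<alpha>*\<beta>-3)*(expE \<alpha> \<beta> t * denom \<alpha> \<beta> a2 t))"
    by (rule ext) (simp add: rad_eq)
  moreover have "((\<lambda>t. -3*(\<alpha>*\<beta>-3)*(expE \<alpha> \<beta> t * denom \<alpha> \<beta> a2 t)) has_real_derivative 
    -3*(\<alpha>*\<beta>-3)*((-(2*(\<alpha>*\<beta>-3)/\<beta>)) * expE \<alpha> \<beta> t * denom \<alpha> \<beta> a2 t
     + expE \<alpha> \<beta> t * (\<beta>^2*((-(2*(\<alpha>*\<beta>-3)/\<beta>)) * expE \<alpha> \<beta> t)))) (at t)"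
    by (rule DERIV_cong[OF DERIV_cmult[OF DERIV_mult[OF dE[of \<alpha> \<beta> t] dD[of \<alpha> \<beta> a2 t]], of "-3*(\<alpha>*\<beta>-3)"]]) (simp add: algebra_simps)
  ultimately show ?thesis by simp
qed

lemma dq:
  assumes b: "\<beta> \<noteq> 0" and k: "\<alpha>*\<beta> \<noteq> 3" and s: "s \<in> {1,-1}" and D: "denom \<alpha> \<beta> a2 t \<noteq> 0"
    and R: "radicand \<alpha> \<beta> a2 t \<ge> 0"
  shows "(qsol \<alpha> \<beta> a2 s has_real_derivative - psol \<alpha> \<beta> a2 s t) (at t)"
proof -
  define E where "E = expE \<alpha> \<beta> t"
  define Dt where "Dt = denom \<alpha> \<beta> a2 t"
  define Rt where "Rt = radicand \<alpha> \<beta> a2 t"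
  define k where "k = \<alpha>*\<beta>-3"
  have Epos: "E > 0" unfolding E_def expE_def by simp
  have kne: "k \<noteq> 0" using k unfolding k_def by auto
  have Req: "Rt = -3*k*E*Dt" unfolding Rt_def k_def E_def Dt_def by (rule rad_eq)
  have Rne: "Rt \<noteq> 0" using Req kne Epos D Dt_def by auto
  have Rpos: "Rt > 0" using Rne R Rt_def by auto
  define v where "v = sqrt Rt"
  have vpos: "v > 0" using Rpos v_def by auto
  have v2: "v^2 = Rt" using Rpos v_def by simp
  have s2: "s^2 = 1" using s by auto
  have sq: "((\<lambda>t. sqrt (radicand \<alpha> \<beta> a2 t)) has_real_derivative 
     inverse v / 2 * (-3*k*((-(2*k/\<beta>)) * E * Dt + E * (\<beta>^2*((-(2*k/\<beta>)) * E))))) (at t)"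
    using DERIV_chain2[OF DERIV_real_sqrt[OF Rpos[unfolded Rt_def]] dR]
    unfolding v_def Rt_def k_def E_def Dt_def .
  have "(qsol \<alpha> \<beta> a2 s has_real_derivative 
     ((s * (inverse v / 2 * (-3*k*((-(2*k/\<beta>)) * E * Dt + E * (\<beta>^2*((-(2*k/\<beta>)) * E)))))) * Dt
      - s * v * (\<beta>^2*((-(2*k/\<beta>)) * E))) / (Dt*Dt)) (at t)"
    unfolding qsol_def[abs_def]
    using DERIV_divide[OF DERIV_cmult[OF sq, of s] dD D]
    unfolding v_def Rt_def k_def E_def Dt_def .
  moreover have "((s * (inverse v / 2 * (-3*k*((-(2*k/\<beta>)) * E * Dt + E * (\<beta>^2*((-(2*k/\<beta>)) * E)))))) * Dt
      - s * v * (\<beta>^2*((-(2*k/\<beta>)) * E))) / (Dt*Dt) = - psol \<alpha> \<beta> a2 s t"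
  proof -
    have "psol \<alpha> \<beta> a2 s t = k * (s * v / Dt) / \<beta> + \<beta>/3 * (s * v / Dt)^3"
      unfolding psol_def qsol_def k_def v_def Rt_def Dt_def by simp
    also have "(s * v / Dt)^3 = s * v * Rt / Dt^3" using s2 v2
      by (simp add: power3_eq_cube power2_eq_square field_simps)
    finally have P: "psol \<alpha> \<beta> a2 s t = k * (s * v / Dt) / \<beta> + \<beta>/3 * (s * v * Rt / Dt^3)" .
    have iv: "inverse v = v / Rt" using v2 vpos Rpos by (simp add: field_simps power2_eq_square)
    show ?thesis unfolding P iv Req using D Dt_def Epos kne b
      by (simp add: field_simps power2_eq_square power3_eq_cube) 
  qed
  ultimately show ?thesis by simp
qed

lemma sign_const:
  fixes q :: "real \<Rightarrow> real"
  assumes I: "is_interval I" and c: "\<And>t. t \<in> I \<Longrightarrow> isCont q t"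
    and nz: "\<And>t. t \<in> I \<Longrightarrow> q t \<noteq> 0" and a: "a \<in> I" and b: "b \<in> I"
  shows "(q a > 0) = (q b > 0)"
proof -
  have main: "(q x > 0) = (q y > 0)" if xy: "x \<le> y" "x \<in> I" "y \<in> I" for x y
  proof -
    have sub: "{x..y} \<subseteq> I"
    proof
      fix z assume "z \<in> {x..y}"
      then show "z \<in> I" using I[unfolded is_interval_1, rule_format, of x y z] xy by auto
    qed
    have co: "continuous_on {x..y} q"
      by (rule continuous_at_imp_continuous_on) (use sub c in blast)
    show ?thesis
    proof (rule ccontr)
      assume "(q x > 0) \<noteq> (q y > 0)"
      then have "(q x \<le> 0 \<and> 0 \<le> q y) \<or> (q y \<le> 0 \<and> 0 \<le> q x)" by auto
      then obtain z where "z \<in> {x..y}" "q z = 0"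
      proof
        assume h: "q x \<le> 0 \<and> 0 \<le> q y"
        obtain z where "z \<ge> x" "z \<le> y" "q z = 0" using IVT'[of q x 0 y] h co xy(1) by blast
        then show ?thesis using that by auto
      next
        assume h: "q y \<le> 0 \<and> 0 \<le> q x"
        obtain z where "z \<ge> x" "z \<le> y" "q z = 0" using IVT2'[of q y 0 x] h co xy(1) by blast
        then show ?thesis using that by auto
      qed
      then show False using nz sub by auto
    qed
  qed
  show ?thesis
  proof (cases "a \<le> b")
    case True then show ?thesis using main[of a b] a b by blast
  next
    case False then have "b \<le> a" by linarith
    then show ?thesis using main[of b a] a b by blast
  qed
qed

lemma dp:
  fixes q p :: "real \<Rightarrow> real"
  assumes b: "\<beta> \<noteq> 0" and g: "\<beta>^2 * \<gamma> + 3 * \<alpha> * \<beta> - 9 = 0"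
   and dq: "(q has_real_derivative - p t) (at t)"
   and pe: "\<And>t. p t = (\<alpha> * \<beta> - 3) * q t / \<beta> + \<beta> / 3 * (q t)^3"
  shows "(p has_real_derivative (- \<gamma> * q t + (q t)^3 - (\<alpha> + \<beta> * (q t)^2) * p t)) (at t)"
proof -
  have "p = (\<lambda>t. ((\<alpha> * \<beta> - 3) / \<beta>) * q t + (\<beta> / 3) * (q t)^3)" using pe by auto
  moreover have "((\<lambda>t. ((\<alpha> * \<beta> - 3) / \<beta>) * q t + (\<beta> / 3) * (q t)^3) has_real_derivative
     ((\<alpha> * \<beta> - 3) / \<beta>) * (- p t) + (\<beta> / 3) * (of_nat 3 * (- p t * (q t)^(3 - Suc 0)))) (at t)"
    by (rule DERIV_add[OF DERIV_cmult[OF dq] DERIV_cmult[OF DERIV_power[OF dq]]])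
  moreover have "((\<alpha> * \<beta> - 3) / \<beta>) * (- p t) + (\<beta> / 3) * (of_nat 3 * (- p t * (q t)^(3 - Suc 0)))
     = - \<gamma> * q t + (q t)^3 - (\<alpha> + \<beta> * (q t)^2) * p t"
  proof -
    have gg: "\<gamma> = (9 - 3*\<alpha>*\<beta>)/\<beta>^2" using g b by (simp add: field_simps)
    have a1: "\<alpha> - (\<alpha> * \<beta> - 3) / \<beta> = 3 / \<beta>" using b by (simp add: field_simps)
    have a2: "3 / \<beta> * p t = 3 * (\<alpha> * \<beta> - 3) * q t / \<beta>^2 + (q t)^3"
      unfolding pe[of t] using b by (simp add: field_simps power2_eq_square)
    have a3: "- \<gamma> * q t = 3 * (\<alpha> * \<beta> - 3) * q t / \<beta>^2"
      unfolding gg using b by (simp add: field_simps)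
    have "- \<gamma> * q t + (q t)^3 - (\<alpha> + \<beta> * (q t)^2) * p t
       = 3 / \<beta> * p t - (\<alpha> + \<beta> * (q t)^2) * p t" using a2 a3 by simp
    also have "... = (\<alpha> - 3 / \<beta>) * (- p t) + \<beta> * (q t)^2 * (- p t)"
      by (simp add: algebra_simps)
    also have "... = ((\<alpha> * \<beta> - 3) / \<beta>) * (- p t) + (\<beta> / 3) * (of_nat 3 * (- p t * (q t)^(3 - Suc 0)))"
      using b by (simp add: field_simps power2_eq_square)
    finally show ?thesis by simp
  qed
  ultimately show ?thesis by simp
qed

lemma hDl: fixes u E c k \<beta> :: real assumes hc: "(u + \<beta>^2/(3*k))*E = c" and "k \<noteq> 0" shows "\<beta>^2*E - 3*c*k = -3*k*u*E"
  unfolding hc[symmetric] using assms(2) by (simp add: field_simps)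
lemma hRl: fixes u E k Q :: real assumes "Q \<noteq> 0" shows "-3*k*E*(-3*k*inverse (Q^2)*E) = (3*k*E/Q)^2"
  using assms by (simp add: field_simps power2_eq_square)
lemma b1l: fixes Q :: real assumes "Q \<noteq> 0" shows "Q^2/\<bar>Q\<bar> = \<bar>Q\<bar>"
  using assms by (cases "Q > 0") (auto simp: power2_eq_square)
lemma qql: fixes Q Q0 k :: real assumes "Q \<noteq> 0" "Q0 \<noteq> 0" "k \<noteq> 0" "(Q0 > 0) = (Q > 0)"
  shows "Q = - (- (sgn Q0 * sgn k)) * (\<bar>k\<bar>/k) * \<bar>Q\<bar>"
  using assms by (cases "Q > 0"; cases "k > 0") (auto simp: sgn_if)
lemma e1: fixes Q P :: real assumes Qn: "Q \<noteq> 0" shows "- (inverse (Q^2) * (of_nat 2 * (- P * Q^(2 - Suc 0))) * inverse (Q^2)) + 0 = 2 * P / Q^3"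
      using Qn by (simp add: field_simps power2_eq_square power3_eq_cube)
lemma e2: fixes Q P k \<beta> :: real assumes Qn: "Q \<noteq> 0" and b: "\<beta> \<noteq> 0" and PQ: "P = k * Q / \<beta> + \<beta>/3 * Q^3" shows "2 * P / Q^3 = 2*k/(\<beta>*Q^2) + 2*\<beta>/3"
      unfolding PQ using Qn b by (simp add: field_simps power2_eq_square power3_eq_cube)
lemma e3: fixes Q P k \<beta> :: real assumes Qn: "Q \<noteq> 0" and b: "\<beta> \<noteq> 0" and kne: "k \<noteq> 0" shows "(-(2*k/\<beta>)) * (inverse (Q^2) + \<beta>^2/(3*k)) = - (2*k/(\<beta>*Q^2)) - 2*\<beta>/3"
      using Qn b kne by (simp add: field_simps power2_eq_square)
lemma qs2l: fixes Q k E u c s :: real assumes "k \<noteq> 0" "E > 0" "Q \<noteq> 0" shows "s * (3*\<bar>k\<bar>*E/\<bar>Q\<bar>) / (-3*k*inverse (Q^2)*E) = - s * (\<bar>k\<bar>/k) * (Q^2/\<bar>Q\<bar>)"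
      using assms by (simp add: field_simps)
lemma distl: fixes A B C E :: real shows "A * E + (B * E) * C = (A + B * C) * E" by (simp add: algebra_simps)

lemma sl: fixes Q0 k :: real assumes "Q0 \<noteq> 0" "k \<noteq> 0" shows "- (sgn Q0 * sgn k) \<in> {1,-1}"
  using assms by (cases "Q0 > 0"; cases "k > 0") (auto simp: sgn_if)

lemma part2:
  fixes q p :: "real \<Rightarrow> real"
  assumes b: "\<beta> \<noteq> 0" and kk: "\<alpha>*\<beta> \<noteq> 3"
    and I: "open I" "is_interval I"
    and d: "\<forall>t\<in>I. (q has_real_derivative (- p t)) (at t)"
    and z: "\<forall>t\<in>I. firstI2 \<alpha> \<beta> q p t = 0 \<and> q t \<noteq> 0"
  shows "\<exists>a2 s. s \<in> {1, -1} \<and> (\<forall>t\<in>I. denom \<alpha> \<beta> a2 t \<noteq> 0 \<and> radicand \<alpha> \<beta> a2 t \<ge> 0 \<and>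
            q t = qsol \<alpha> \<beta> a2 s t \<and> p t = psol \<alpha> \<beta> a2 s t)"
proof (cases "I = {}")
  case True then show ?thesis by auto
next
  case False then obtain t0 where t0: "t0 \<in> I" by auto
  define k where "k = \<alpha>*\<beta>-3"
  have kne: "k \<noteq> 0" using kk unfolding k_def by auto
  have qnz: "\<And>t. t\<in>I \<Longrightarrow> q t \<noteq> 0" using z by auto
  have pe: "p t = k * q t / \<beta> + \<beta>/3 * (q t)^3" if t: "t\<in>I" for t
  proof -
    have "(p t - (\<alpha> * \<beta> - 3) * q t / \<beta> - \<beta> / 3 * (q t)^3) * exp (3 * t / \<beta>) = 0"
      using z t unfolding firstI2_def by auto
    then show ?thesis unfolding k_def by simp
  qed
  define w where "w = (\<lambda>t. (inverse ((q t)^2) + \<beta>^2/(3*k)) * expE \<alpha> \<beta> t)"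
  have dw: "(w has_real_derivative 0) (at t)" if t: "t\<in>I" for t
  proof -
    have q2: "(q t)^2 \<noteq> 0" using qnz t by auto
    have h1: "((\<lambda>t. (q t)^2) has_real_derivative of_nat 2 * (- p t * (q t)^(2 - Suc 0))) (at t)"
      by (rule DERIV_power[OF d[rule_format, OF t]])
    have h2: "((\<lambda>t. inverse ((q t)^2)) has_real_derivative 
       - (inverse ((q t)^2) * (of_nat 2 * (- p t * (q t)^(2 - Suc 0))) * inverse ((q t)^2))) (at t)"
      by (rule DERIV_inverse'[OF h1 q2])
    define Q where "Q = q t"
    define P where "P = p t"
    have Qn: "Q \<noteq> 0" using qnz[OF t] Q_def by auto
    have PQ: "P = k * Q / \<beta> + \<beta>/3 * Q^3" using pe[OF t] P_def Q_def by simp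
    have h3: "(w has_real_derivative 
       (- (inverse (Q^2) * (of_nat 2 * (- P * Q^(2 - Suc 0))) * inverse (Q^2)) + 0) * expE \<alpha> \<beta> t
       + ((-(2*(\<alpha>*\<beta>-3)/\<beta>)) * expE \<alpha> \<beta> t) * (inverse (Q^2) + \<beta>^2/(3*k))) (at t)"
      unfolding w_def Q_def P_def by (rule DERIV_mult[OF DERIV_add[OF h2 DERIV_const] dE])
    note e1 = e1[OF Qn, of P]
    note e2 = e2[OF Qn b PQ]
    note e3 = e3[OF Qn b kne]
    have "(- (inverse (Q^2) * (of_nat 2 * (- P * Q^(2 - Suc 0))) * inverse (Q^2)) + 0) * expE \<alpha> \<beta> t
       + ((-(2*(\<alpha>*\<beta>-3)/\<beta>)) * expE \<alpha> \<beta> t) * (inverse (Q^2) + \<beta>^2/(3*k))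
       = ((- (inverse (Q^2) * (of_nat 2 * (- P * Q^(2 - Suc 0))) * inverse (Q^2)) + 0)
          + (-(2*(\<alpha>*\<beta>-3)/\<beta>)) * (inverse (Q^2) + \<beta>^2/(3*k))) * expE \<alpha> \<beta> t"
      by (rule distl)
    also have "... = 0" unfolding k_def[symmetric] e1 e2 e3 by simp
    finally show ?thesis using h3 by simp
  qed
  have "\<exists>c. \<forall>x\<in>I. w x = c"
    by (rule has_field_derivative_zero_constant[OF is_interval_convex[OF I(2)]])
       (rule has_field_derivative_at_within[OF dw])
  then obtain c where c: "\<And>x. x\<in>I \<Longrightarrow> w x = c" by blast
  define s where "s = - (sgn (q t0) * sgn k)"
  have cont: "\<And>t. t\<in>I \<Longrightarrow> isCont q t" using d by (blast intro: DERIV_isCont)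
  have S: "s \<in> {1,-1}" unfolding s_def by (rule sl[OF qnz[OF t0] kne])
  have T: "denom \<alpha> \<beta> c t \<noteq> 0 \<and> radicand \<alpha> \<beta> c t \<ge> 0 \<and>
            q t = qsol \<alpha> \<beta> c s t \<and> p t = psol \<alpha> \<beta> c s t" if t: "t \<in> I" for t
  proof -
    define E where "E = expE \<alpha> \<beta> t"
    have Epos: "E > 0" unfolding E_def expE_def by simp
    define u where "u = inverse ((q t)^2)"
    have upos: "u > 0" using qnz[OF t] unfolding u_def by auto
    have hc: "(u + \<beta>^2/(3*k)) * E = c" using c[OF t] unfolding w_def u_def E_def by simp
    have hD: "denom \<alpha> \<beta> c t = -3*k*u*E"
      unfolding denom_def E_def[symmetric] k_def[symmetric] using hDl[OF hc kne] by (simp add: mult.commute)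
    have Dne: "denom \<alpha> \<beta> c t \<noteq> 0" unfolding hD using kne upos Epos by auto
    have hR: "radicand \<alpha> \<beta> c t = (3*k*E/q t)^2"
      unfolding rad_eq E_def[symmetric] k_def[symmetric] hD u_def using hRl[OF qnz[OF t]] .
    have R0: "radicand \<alpha> \<beta> c t \<ge> 0" unfolding hR by simp
    have sg: "(q t0 > 0) = (q t > 0)" by (rule sign_const[OF I(2) cont qnz t0 t])
    have qs: "qsol \<alpha> \<beta> c s t = s * \<bar>3*k*E/q t\<bar> / (-3*k*u*E)"
      unfolding qsol_def hR hD by simp
    have a: "\<bar>3*k*E/q t\<bar> = 3*\<bar>k\<bar>*E/\<bar>q t\<bar>" using Epos by (simp add: abs_mult abs_divide)
    have qs2: "qsol \<alpha> \<beta> c s t = - s * (\<bar>k\<bar>/k) * ((q t)^2/\<bar>q t\<bar>)"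
      unfolding qs a u_def by (rule qs2l[OF kne Epos qnz[OF t]])
    have b1: "(q t)^2/\<bar>q t\<bar> = \<bar>q t\<bar>" by (rule b1l[OF qnz[OF t]])
    have qq0: "q t = - s * (\<bar>k\<bar>/k) * \<bar>q t\<bar>"
      unfolding s_def by (rule qql[OF qnz[OF t] qnz[OF t0] kne sg])
    have qq: "q t = qsol \<alpha> \<beta> c s t"
      unfolding qs2 b1 by (rule qq0)
    have pp: "p t = psol \<alpha> \<beta> c s t"
      unfolding psol_def qq[symmetric] pe[OF t] k_def ..
    show ?thesis using Dne R0 qq pp by blast
  qed
  show ?thesis using S T by blast
qed

theorem mainTheorem6:
  fixes \<alpha> \<beta> \<gamma> :: real
  assumes "\<beta> \<noteq> 0" and "\<alpha> * \<beta> \<noteq> 3" and "\<beta>^2 * \<gamma> + 3 * \<alpha> * \<beta> - 9 = 0"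
  shows
   "(\<forall>a2 s (I :: real set).
       s \<in> {1, -1} \<and> open I \<and> is_interval I \<and>
       (\<forall>t\<in>I. denom \<alpha> \<beta> a2 t \<noteq> 0 \<and> radicand \<alpha> \<beta> a2 t \<ge> 0) \<longrightarrow>
       (let q = qsol \<alpha> \<beta> a2 s; p = psol \<alpha> \<beta> a2 s in
        \<forall>t\<in>I.
          (q has_real_derivative (- p t)) (at t) \<and>
          (p has_real_derivative
             (- \<gamma> * q t + (q t)^3 - (\<alpha> + \<beta> * (q t)^2) * p t)) (at t) \<and>
          deriv (deriv q) t + (\<alpha> + \<beta> * (q t)^2) * deriv q t - \<gamma> * q t + (q t)^3 = 0 \<and>
          firstI2 \<alpha> \<beta> q p t = 0 \<and> q t \<noteq> 0))
    \<and>
    (\<forall>(q :: real \<Rightarrow> real) (p :: real \<Rightarrow> real) (I :: real set).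
       open I \<and> is_interval I \<and>
       (\<forall>t\<in>I. (q has_real_derivative (- p t)) (at t) \<and>
               (p has_real_derivative
                  (- \<gamma> * q t + (q t)^3 - (\<alpha> + \<beta> * (q t)^2) * p t)) (at t)) \<and>
       (\<forall>t\<in>I. firstI2 \<alpha> \<beta> q p t = 0 \<and> q t \<noteq> 0) \<longrightarrow>
       (\<exists>a2 s. s \<in> {1, -1} \<and>
          (\<forall>t\<in>I. denom \<alpha> \<beta> a2 t \<noteq> 0 \<and> radicand \<alpha> \<beta> a2 t \<ge> 0 \<and>
                  q t = qsol \<alpha> \<beta> a2 s t \<and> p t = psol \<alpha> \<beta> a2 s t)))"
proof (intro conjI allI impI)
  fix a2 s :: real and I :: "real set"
  assume H: "s \<in> {1, -1} \<and> open I \<and> is_interval I \<and>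
       (\<forall>t\<in>I. denom \<alpha> \<beta> a2 t \<noteq> 0 \<and> radicand \<alpha> \<beta> a2 t \<ge> 0)"
  define q where "q = qsol \<alpha> \<beta> a2 s"
  define p where "p = psol \<alpha> \<beta> a2 s"
  have dq1: "(q has_real_derivative (- p t)) (at t)" if t: "t\<in>I" for t
    unfolding q_def p_def using dq[OF assms(1,2)] H t by blast
  have pe: "\<And>t. p t = (\<alpha> * \<beta> - 3) * q t / \<beta> + \<beta> / 3 * (q t)^3"
    unfolding p_def q_def psol_def by simp
  have dp1: "(p has_real_derivative (- \<gamma> * q t + (q t)^3 - (\<alpha> + \<beta> * (q t)^2) * p t)) (at t)"
    if t: "t\<in>I" for t
    by (rule dp[OF assms(1,3) dq1[OF t] pe])
  show "let q = qsol \<alpha> \<beta> a2 s; p = psol \<alpha> \<beta> a2 s in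
        \<forall>t\<in>I.
          (q has_real_derivative (- p t)) (at t) \<and>
          (p has_real_derivative
             (- \<gamma> * q t + (q t)^3 - (\<alpha> + \<beta> * (q t)^2) * p t)) (at t) \<and>
          deriv (deriv q) t + (\<alpha> + \<beta> * (q t)^2) * deriv q t - \<gamma> * q t + (q t)^3 = 0 \<and>
          firstI2 \<alpha> \<beta> q p t = 0 \<and> q t \<noteq> 0"
    unfolding Let_def q_def[symmetric] p_def[symmetric]
  proof (intro ballI conjI)
    fix t assume t: "t \<in> I"
    show "(q has_real_derivative (- p t)) (at t)" by (rule dq1[OF t])
    show "(p has_real_derivative (- \<gamma> * q t + (q t)^3 - (\<alpha> + \<beta> * (q t)^2) * p t)) (at t)"
      by (rule dp1[OF t])
    have dd: "deriv q x = - p x" if "x \<in> I" for x using DERIV_imp_deriv[OF dq1[OF that]] .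
    have opI: "open I" using H by blast
    have dd': "\<And>x. x \<in> I \<Longrightarrow> - p x = deriv q x" using dd by simp
    have "(deriv q has_real_derivative - (- \<gamma> * q t + (q t)^3 - (\<alpha> + \<beta> * (q t)^2) * p t)) (at t)"
      by (rule has_field_derivative_transform_within_open[OF DERIV_minus[OF dp1[OF t]] opI t dd'])
    then have "deriv (deriv q) t = - (- \<gamma> * q t + (q t)^3 - (\<alpha> + \<beta> * (q t)^2) * p t)"
      by (rule DERIV_imp_deriv)
    then show "deriv (deriv q) t + (\<alpha> + \<beta> * (q t)^2) * deriv q t - \<gamma> * q t + (q t)^3 = 0"
      using dd[OF t] by (simp add: algebra_simps)
    show "firstI2 \<alpha> \<beta> q p t = 0" unfolding firstI2_def pe by simp
    have Dn: "denom \<alpha> \<beta> a2 t \<noteq> 0" and Rn: "radicand \<alpha> \<beta> a2 t \<ge> 0" using H t by auto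
    have "radicand \<alpha> \<beta> a2 t \<noteq> 0"
      unfolding rad_eq using Dn assms(2) by (simp add: expE_def)
    then have "sqrt (radicand \<alpha> \<beta> a2 t) \<noteq> 0" using Rn by simp
    moreover have "s \<noteq> 0" using H by auto
    ultimately show "q t \<noteq> 0" unfolding q_def qsol_def using Dn by simp
  qed
next
  fix q p :: "real \<Rightarrow> real" and I :: "real set"
  assume H: "open I \<and> is_interval I \<and>
       (\<forall>t\<in>I. (q has_real_derivative (- p t)) (at t) \<and>
               (p has_real_derivative
                  (- \<gamma> * q t + (q t)^3 - (\<alpha> + \<beta> * (q t)^2) * p t)) (at t)) \<and>
       (\<forall>t\<in>I. firstI2 \<alpha> \<beta> q p t = 0 \<and> q t \<noteq> 0)"
  show "\<exists>a2 s. s \<in> {1, -1} \<and>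
          (\<forall>t\<in>I. denom \<alpha> \<beta> a2 t \<noteq> 0 \<and> radicand \<alpha> \<beta> a2 t \<ge> 0 \<and>
                  q t = qsol \<alpha> \<beta> a2 s t \<and> p t = psol \<alpha> \<beta> a2 s t)"
  proof (rule part2[OF assms(1,2)])
    show "open I" "is_interval I" using H by blast+
    show "\<forall>t\<in>I. (q has_real_derivative - p t) (at t)" using H by blast
    show "\<forall>t\<in>I. firstI2 \<alpha> \<beta> q p t = 0 \<and> q t \<noteq> 0" using H by blast
  qed
qed

end
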